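(* Let $W$ be a channel from $\{1,\dots,m\}$ to $\{1,\dots,n\}$ and let $s$ be the number of distinct values among the entries $W_{i,j}$. Then every $\lambda\in\Lambda(W)$ satisfies \[ \mathrm{w}(\lambda)\ge \max\big(\lceil\log_2 s\rceil,\ \mathrm{w}(W_{1,*}),\dots,\mathrm{w}(W_{m,*})\big). \]
   Context: A channel is a row-stochastic matrix; $\mathcal{D}$ is the set of deterministic (0-1) channels from $\{1,\dots,m\}$ to $\{1,\dots,n\}$. $\Lambda(W)=\{\lambda\text{ probability distribution on }\mathcal{D}: W=\sum_D\lambda_DD\}$. $\mathrm{w}(x)$ is the number of nonzero entries of a vector $x$ (for $\lambda$, the size of its support); $W_{i,*}$ is the $i$-th row of $W$. *)

theory Defs
  imports Complex_Main
begin

definition channel :: "('m::finite \<Rightarrow> 'n::finite \<Rightarrow> real) \<Rightarrow> bool" where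
  "channel W \<longleftrightarrow> (\<forall>i j. W i j \<ge> 0) \<and> (\<forall>i. (\<Sum>j\<in>UNIV. W i j) = 1)"

definition det_channels :: "('m::finite \<Rightarrow> 'n::finite \<Rightarrow> real) set" where
  "det_channels = {D. channel D \<and> (\<forall>i j. D i j = 0 \<or> D i j = 1)}"

definition Lambda :: "('m::finite \<Rightarrow> 'n::finite \<Rightarrow> real)
    \<Rightarrow> (('m \<Rightarrow> 'n \<Rightarrow> real) \<Rightarrow> real) set" where
  "Lambda W = {lam. (\<forall>D. lam D \<ge> 0) \<and> (\<forall>D. D \<notin> det_channels \<longrightarrow> lam D = 0)
      \<and> (\<Sum>D\<in>det_channels. lam D) = 1
      \<and> W = (\<lambda>i j. \<Sum>D\<in>det_channels. lam D * D i j)}"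

definition wt_dist :: "(('m \<Rightarrow> 'n \<Rightarrow> real) \<Rightarrow> real) \<Rightarrow> nat" where
  "wt_dist lam = card {D. lam D \<noteq> 0}"

definition wt_vec :: "('n::finite \<Rightarrow> real) \<Rightarrow> nat" where
  "wt_vec x = card {j. x j \<noteq> 0}"

end

theory Submission
  imports Defs "HOL-Library.FuncSet"
begin

lemma det_finite: "finite (det_channels :: ('m::finite \<Rightarrow> 'n::finite \<Rightarrow> real) set)"
proof -
  have "det_channels \<subseteq> PiE (UNIV::'m set) (\<lambda>_. PiE (UNIV::'n set) (\<lambda>_. {0::real,1}))"
    unfolding det_channels_def by (auto simp: PiE_UNIV_domain)
  moreover have "finite (PiE (UNIV::'m set) (\<lambda>_. PiE (UNIV::'n set) (\<lambda>_. {0::real,1})))"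
    by (intro finite_PiE) auto
  ultimately show ?thesis by (rule finite_subset)
qed

theorem proposition13:
  fixes W :: "'m::finite \<Rightarrow> 'n::finite \<Rightarrow> real"
    and lam :: "('m \<Rightarrow> 'n \<Rightarrow> real) \<Rightarrow> real"
  assumes "channel W"
    and "lam \<in> Lambda W"
  shows "wt_dist lam \<ge>
    max (nat \<lceil>log 2 (real (card {W i j | i j. True}))\<rceil>) (Max (range (\<lambda>i. wt_vec (W i))))"
proof -
  define S where "S = {D. lam D \<noteq> 0}"
  have L: "\<forall>D. D \<notin> det_channels \<longrightarrow> lam D = 0" "W = (\<lambda>i j. \<Sum>D\<in>det_channels. lam D * D i j)"
    using assms(2) unfolding Lambda_def by auto
  have Ssub: "S \<subseteq> det_channels" using L(1) S_def by auto
  have finS: "finite S" using Ssub det_finite finite_subset by blast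
  have k: "wt_dist lam = card S" unfolding wt_dist_def S_def ..
  have Wsum: "W i j = (\<Sum>D\<in>S. lam D * D i j)" for i j
  proof -
    have "(\<Sum>D\<in>det_channels. lam D * D i j) = (\<Sum>D\<in>S. lam D * D i j)"
      by (rule sum.mono_neutral_right[OF det_finite Ssub]) (auto simp: S_def)
    thus ?thesis using L(2) by simp
  qed
  have Wsub: "W i j = sum lam {D\<in>S. D i j = 1}" for i j
  proof -
    have "(\<Sum>D\<in>S. lam D * D i j) = (\<Sum>D\<in>S. if D i j = 1 then lam D else 0)"
    proof (rule sum.cong)
      fix D assume "D \<in> S"
      hence "D i j = 0 \<or> D i j = 1" using Ssub unfolding det_channels_def by auto
      thus "lam D * D i j = (if D i j = 1 then lam D else 0)" by auto
    qed simp
    also have "\<dots> = sum lam {D\<in>S. D i j = 1}" using finS by (simp add: sum.inter_filter)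
    finally show ?thesis using Wsum by simp
  qed
  have vals: "{W i j | i j. True} \<subseteq> sum lam ` Pow S" using Wsub by auto
  have cardle: "card {W i j | i j. True} \<le> 2 ^ card S"
  proof -
    have "card {W i j | i j. True} \<le> card (sum lam ` Pow S)"
      by (rule card_mono[OF _ vals]) (simp add: finS)
    also have "\<dots> \<le> card (Pow S)" by (rule card_image_le) (simp add: finS)
    also have "\<dots> = 2 ^ card S" using finS by (simp add: card_Pow)
    finally show ?thesis .
  qed
  have pos: "card {W i j | i j. True} > 0"
  proof -
    have "finite {W i j | i j. True}" using vals finS finite_subset by blast
    moreover have "{W i j | i j. True} \<noteq> {}" by auto
    ultimately show ?thesis by (simp add: card_gt_0_iff)
  qed
  have "log 2 (real (card {W i j | i j. True})) \<le> log 2 (2 ^ card S)"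
    using cardle pos by (subst log_le_cancel_iff) (auto simp flip: of_nat_power)
  hence "log 2 (real (card {W i j | i j. True})) \<le> real (card S)" by (simp add: log_nat_power)
  hence p1: "nat \<lceil>log 2 (real (card {W i j | i j. True}))\<rceil> \<le> card S"
    by (metis ceiling_mono ceiling_of_nat nat_le_iff)
  have p2: "wt_vec (W i) \<le> card S" for i
  proof -
    have "{j. W i j \<noteq> 0} \<subseteq> (\<lambda>D. SOME j. D i j = 1) ` S"
    proof
      fix j assume "j \<in> {j. W i j \<noteq> 0}"
      hence "sum lam {D\<in>S. D i j = 1} \<noteq> 0" using Wsub by simp
      hence "{D\<in>S. D i j = 1} \<noteq> {}" by (metis sum.empty)
      then obtain D where D: "D \<in> S" "D i j = 1" by blast
      have uniq: "\<And>j'. D i j' = 1 \<Longrightarrow> j' = j"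
      proof (rule ccontr)
        fix j' assume a: "D i j' = 1" "j' \<noteq> j"
        have ch: "channel D" "\<forall>a b. D a b = 0 \<or> D a b = 1" using D(1) Ssub unfolding det_channels_def by auto
        have nn: "\<forall>b. D i b \<ge> 0" using ch(1) unfolding channel_def by auto
        have "(\<Sum>b\<in>UNIV. D i b) \<ge> (\<Sum>b\<in>{j,j'}. D i b)"
          by (rule sum_mono2) (use nn in auto)
        also have "(\<Sum>b\<in>{j,j'}. D i b) = 2" using a D(2) by simp
        finally show False using ch(1) unfolding channel_def by auto
      qed
      have "(SOME j. D i j = 1) = j" using D(2) uniq by (metis (mono_tags, lifting) someI)
      thus "j \<in> (\<lambda>D. SOME j. D i j = 1) ` S" using D(1) by force
    qed
    hence "card {j. W i j \<noteq> 0} \<le> card ((\<lambda>D. SOME j. D i j = 1) ` S)"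
      by (intro card_mono) (auto simp: finS)
    also have "\<dots> \<le> card S" by (rule card_image_le[OF finS])
    finally show ?thesis unfolding wt_vec_def .
  qed
  have "Max (range (\<lambda>i. wt_vec (W i))) \<le> card S"
    using p2 by (subst Max_le_iff) auto
  thus ?thesis using p1 k by simp
qed

end
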